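(* For every $\eta>0$ and $\delta\ge0$ there exist $C_{\eta,\delta}>0$ and $\varepsilon_*>0$, independent of $\varepsilon$, such that for all $\varepsilon\in(0,\varepsilon_* )$ and all $h\in L^2(\mathbb R_+)$, $$\big\|Z^{1/2}|\log Z|^{1+\frac\eta3}h\big\|_{L^2(\mathbb R_+)}\le C_{\eta,\delta}\,|\log\varepsilon|^{1+\frac\eta3}\Big(\|Z^{1/2}h\|_{L^2(\mathbb R_+)}+\varepsilon^{\frac14+\delta}\|h\|_{L^2(\mathbb R_+)}\Big).$$ Consequently, for every $L^2$ function $R$ supported in $[0,2]$, $$|\langle R,\partial_y^{-1}h\rangle|\le C_{\eta,\delta}|\log\varepsilon|^{1+\frac\eta3}\|Z^{1/2}R\|_{L^2}\Big(\|Z^{1/2}h\|_{L^2}+\varepsilon^{\frac14+\delta}\|h\|_{L^2}\Big).$$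
   Context: $\langle f,g\rangle=\int_0^\infty f\bar g\,dy$, $\partial_y^{-1}h(y)=\int_0^yh(s)\,ds$. Standing assumptions on the shear profile: $U_s,H_s\in C^3(\mathbb R_+)\cap C^1(\overline{\mathbb R_+})$ are functions of $Y\ge0$ with $U_s(0)=0$, $H_s'(0)=0$, $U_s(Y)\to U_E$ and $H_s(Y)\to H_E\neq0$ as $Y\to\infty$; $\bar M:=\sum_{k=1}^3\sup_{Y\ge0}(1+Y)^3(|\partial_Y^kU_s(Y)|+|\partial_Y^kH_s(Y)|)<\infty$; there are constants $0<\underline\gamma\le\bar\gamma$ with $\underline\gamma\le|H_s(Y)|\le\bar\gamma$ for all $Y>0$; and with $G_s:=H_s^2-U_s^2$, $\gamma_0:=\inf_{Y\ge0}G_s(Y)>0$. The weight $Z$: let $\widetilde G\in C^1([0,\infty))$ be a function with $\widetilde G(y)=1/G_s(y/\sqrt\varepsilon)$ for $0\le y\le1$, $\widetilde G(y)=0$ for $y\ge2$, $\widetilde G\ge0$ on $[0,\infty)$, $\frac1{2\bar\gamma^2}\le\widetilde G\le\frac2{\gamma_0}$ and $|\widetilde G'|\le C\bar M\varepsilon$ on $[1,3/2]$ (with $C$ an absolute constant), and $\widetilde G'\le0$ on $[3/2,2]$; set $Z(y)=\int_0^y\widetilde G(s)\,ds$. *)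

theory Defs
  imports "HOL-Analysis.Analysis"
begin

definition in_L2 :: "(real \<Rightarrow> complex) \<Rightarrow> bool" where
  "in_L2 f \<longleftrightarrow> set_borel_measurable lborel {0..} f
     \<and> set_integrable lborel {0..} (\<lambda>y. (cmod (f y))\<^sup>2)"

definition L2norm :: "(real \<Rightarrow> complex) \<Rightarrow> real" where
  "L2norm f = sqrt (LINT y:{0..}|lborel. (cmod (f y))\<^sup>2)"

definition inner0 :: "(real \<Rightarrow> complex) \<Rightarrow> (real \<Rightarrow> complex) \<Rightarrow> complex" where
  "inner0 f g = (LINT y:{0..}|lborel. f y * cnj (g y))"

definition prim :: "(real \<Rightarrow> complex) \<Rightarrow> real \<Rightarrow> complex" where
  "prim h y = (LINT s:{0..y}|lborel. h s)"

definition Gs :: "(real \<Rightarrow> real) \<Rightarrow> (real \<Rightarrow> real) \<Rightarrow> real \<Rightarrow> real" where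
  "Gs Us Hs Y = (Hs Y)\<^sup>2 - (Us Y)\<^sup>2"

definition gamma0 :: "(real \<Rightarrow> real) \<Rightarrow> (real \<Rightarrow> real) \<Rightarrow> real" where
  "gamma0 Us Hs = Inf (Gs Us Hs ` {0..})"

definition C3_pos :: "(real \<Rightarrow> real) \<Rightarrow> bool" where
  "C3_pos f \<longleftrightarrow> (\<forall>k<3. \<forall>Y>0. ((deriv ^^ k) f has_real_derivative (deriv ^^ Suc k) f Y) (at Y))
     \<and> continuous_on {0<..} ((deriv ^^ 3) f)"

definition C1_closed :: "(real \<Rightarrow> real) \<Rightarrow> bool" where
  "C1_closed f \<longleftrightarrow> (\<exists>f'. continuous_on {0..} f'
      \<and> (\<forall>Y\<ge>0. (f has_real_derivative f' Y) (at Y within {0..})))"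

definition Mbar :: "(real \<Rightarrow> real) \<Rightarrow> (real \<Rightarrow> real) \<Rightarrow> real" where
  "Mbar Us Hs = (\<Sum>k\<in>{1..3::nat}. SUP Y\<in>{0<..}. (1 + Y)^3 * (\<bar>(deriv ^^ k) Us Y\<bar> + \<bar>(deriv ^^ k) Hs Y\<bar>))"

definition shear_profile ::
  "(real \<Rightarrow> real) \<Rightarrow> (real \<Rightarrow> real) \<Rightarrow> real \<Rightarrow> real \<Rightarrow> real \<Rightarrow> real \<Rightarrow> bool" where
  "shear_profile Us Hs UE HE gl gu \<longleftrightarrow>
     C3_pos Us \<and> C3_pos Hs \<and> C1_closed Us \<and> C1_closed Hs
   \<and> Us 0 = 0 \<and> (Hs has_real_derivative 0) (at 0 within {0..})
   \<and> (Us \<longlongrightarrow> UE) at_top \<and> (Hs \<longlongrightarrow> HE) at_top \<and> HE \<noteq> 0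
   \<and> (\<forall>k\<in>{1..3::nat}. bdd_above ((\<lambda>Y. (1 + Y)^3 * (\<bar>(deriv ^^ k) Us Y\<bar> + \<bar>(deriv ^^ k) Hs Y\<bar>)) ` {0<..}))
   \<and> 0 < gl \<and> gl \<le> gu \<and> (\<forall>Y>0. gl \<le> \<bar>Hs Y\<bar> \<and> \<bar>Hs Y\<bar> \<le> gu)
   \<and> bdd_below (Gs Us Hs ` {0..}) \<and> gamma0 Us Hs > 0"

text \<open>admissible cut-off function G tilde for parameter eps (Cabs = the absolute constant)\<close>
definition weight_fn ::
  "(real \<Rightarrow> real) \<Rightarrow> (real \<Rightarrow> real) \<Rightarrow> real \<Rightarrow> real \<Rightarrow> real \<Rightarrow> (real \<Rightarrow> real) \<Rightarrow> bool" where
  "weight_fn Us Hs gu Cabs eps G \<longleftrightarrow>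
     (\<exists>G'. continuous_on {0..} G' \<and> (\<forall>y\<ge>0. (G has_real_derivative G' y) (at y within {0..}))
       \<and> (\<forall>y\<in>{0..1}. G y = 1 / Gs Us Hs (y / sqrt eps))
       \<and> (\<forall>y\<ge>2. G y = 0)
       \<and> (\<forall>y\<ge>0. G y \<ge> 0)
       \<and> (\<forall>y\<in>{0..3/2}. 1 / (2 * gu\<^sup>2) \<le> G y \<and> G y \<le> 2 / gamma0 Us Hs)
       \<and> (\<forall>y\<in>{1..3/2}. \<bar>G' y\<bar> \<le> Cabs * Mbar Us Hs * eps)
       \<and> (\<forall>y\<in>{3/2..2}. G' y \<le> 0))"

definition Zw :: "(real \<Rightarrow> real) \<Rightarrow> real \<Rightarrow> real" where
  "Zw G y = (LINT s:{0..y}|lborel. G s)"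

end

theory Submission
  imports Defs
begin



lemma lam_bound:
  fixes x a b :: real
  assumes a: "a \<ge> 0" and b: "b \<ge> 0" and H: "\<And>l. l > 0 \<Longrightarrow> x \<le> l * a + b / l"
  shows "x \<le> 2 * sqrt (a * b)"
proof (cases "a > 0 \<and> b > 0")
  case True
  define l where "l = sqrt (b / a)"
  have lp: "l > 0" using True by (simp add: l_def)
  have ab: "a * b = b / a * a\<^sup>2" using True by (simp add: power2_eq_square field_simps)
  have "l * a = sqrt (b / a) * sqrt (a\<^sup>2)" using a unfolding l_def by simp
  also have "\<dots> = sqrt (a * b)" unfolding ab real_sqrt_mult ..
  finally have e1: "l * a = sqrt (a * b)" .
  have ab2: "a * b = b\<^sup>2 / (b / a)" using True by (simp add: power2_eq_square field_simps)
  have "b / l = sqrt (b\<^sup>2) / sqrt (b / a)" using b unfolding l_def by simp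
  also have "\<dots> = sqrt (a * b)" unfolding ab2 real_sqrt_divide ..
  finally have e2: "b / l = sqrt (a * b)" .
  from e1 e2 show ?thesis using H[OF lp] by simp
next
  case False
  have "x \<le> 0"
  proof (rule ccontr)
    assume xp: "\<not> x \<le> 0"
    show False
    proof (cases "a = 0")
      case True
      define l where "l = 2 * b / x + 1"
      have "0 \<le> 2 * b / x" using xp b by simp
      then have lp: "l > 0" unfolding l_def by linarith
      have "x * l = 2 * b + x" using xp unfolding l_def by (simp add: field_simps)
      then have "b < x * l" using xp b by linarith
      then have "b / l < x" using lp by (simp add: divide_less_eq mult.commute)
      then show False using H[OF lp] True by simp
    next
      case False
      then have "b = 0" using \<open>\<not> (a > 0 \<and> b > 0)\<close> a b by auto
      define l where "l = x / (2 * a)"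
      have lp: "l > 0" using xp a False by (simp add: l_def)
      have "l * a = x / 2" using False unfolding l_def by (simp add: field_simps)
      then have "l * a < x" using xp by linarith
      then show False using H[OF lp] \<open>b = 0\<close> by simp
    qed
  qed
  moreover have "0 \<le> 2 * sqrt (a * b)" using a b by simp
  ultimately show ?thesis by linarith
qed

lemma Zw_int: assumes "continuous_on {0..} G" "y \<ge> 0"
  shows "Zw G y = integral {0..y} G" "G integrable_on {0..y}"
proof -
  have c: "continuous_on {0..y} G" using assms(1) by (rule continuous_on_subset) auto
  show "Zw G y = integral {0..y} G" unfolding Zw_def
    by (rule set_borel_integral_eq_integral(2)[OF borel_integrable_atLeastAtMost'[OF c]])
  show "G integrable_on {0..y}" by (rule integrable_continuous_real[OF c])
qed

lemma Zw_neg: "y < 0 \<Longrightarrow> Zw G y = 0"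
  unfolding Zw_def set_lebesgue_integral_def by simp

lemma Z_props:
  fixes G :: "real \<Rightarrow> real"
  assumes contG: "continuous_on {0..} G" and nn: "\<And>y. y \<ge> 0 \<Longrightarrow> G y \<ge> 0"
    and ub: "\<And>y. y \<in> {0..2} \<Longrightarrow> G y \<le> c1"
    and lb: "\<And>y. y \<in> {0..3/2} \<Longrightarrow> c0 \<le> G y"
    and zero: "\<And>y. y \<ge> 2 \<Longrightarrow> G y = 0" and c0p: "c0 > 0"
  shows "mono (Zw G)" "\<And>y. 0 \<le> Zw G y" "\<And>y. Zw G y \<le> 2 * c1"
    "\<And>y. y \<in> {0..2} \<Longrightarrow> 3/4 * c0 * y \<le> Zw G y"
proof -
  have nn0: "\<And>y. 0 \<le> Zw G y"
  proof -
    fix y :: real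
    show "0 \<le> Zw G y"
    proof (cases "y < 0")
      case True then show ?thesis by (simp add: Zw_neg)
    next
      case False
      then have y0: "y \<ge> 0" by simp
      have "0 \<le> integral {0..y} G"
        by (rule integral_nonneg[OF Zw_int(2)[OF contG y0]]) (use nn in auto)
      then show ?thesis using Zw_int(1)[OF contG y0] by simp
    qed
  qed
  show "\<And>y. 0 \<le> Zw G y" by (rule nn0)
  show "mono (Zw G)"
  proof (rule monoI)
    fix x y :: real assume xy: "x \<le> y"
    show "Zw G x \<le> Zw G y"
    proof (cases "x < 0")
      case True then show ?thesis using nn0[of y] by (simp add: Zw_neg)
    next
      case False
      then have "x \<ge> 0" "y \<ge> 0" using xy by auto
      have "integral {0..x} G \<le> integral {0..y} G"
        by (rule integral_subset_le[OF _ Zw_int(2)[OF contG \<open>x \<ge> 0\<close>] Zw_int(2)[OF contG \<open>y \<ge> 0\<close>]])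
          (use xy nn in auto)
      then show ?thesis using Zw_int(1)[OF contG \<open>x \<ge> 0\<close>] Zw_int(1)[OF contG \<open>y \<ge> 0\<close>] by simp
    qed
  qed
  show "\<And>y. Zw G y \<le> 2 * c1"
  proof -
    fix y :: real
    have c1: "c1 \<ge> 0" using ub[of 0] nn[of 0] by auto
    show "Zw G y \<le> 2 * c1"
    proof (cases "y < 0")
      case True then show ?thesis using c1 by (simp add: Zw_neg)
    next
      case False
      define m where "m = min y 2"
      have m: "0 \<le> m" "m \<le> y" "m \<le> 2" using False by (auto simp: m_def)
      have i: "G integrable_on {0..y}" using Zw_int[OF contG, of y] False by auto
      have "integral {0..m} G + integral {m..y} G = integral {0..y} G"
        by (rule Henstock_Kurzweil_Integration.integral_combine[OF m(1) m(2) i])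
      moreover have "integral {m..y} G = 0"
      proof (cases "y \<le> 2")
        case True then have "m = y" by (simp add: m_def)
        then show ?thesis by simp
      next
        case False then have "m = 2" by (simp add: m_def)
        then have "integral {m..y} G = integral {m..y} (\<lambda>_. 0::real)"
          by (intro integral_cong) (auto simp: zero)
        then show ?thesis by simp
      qed
      moreover have "integral {0..m} G \<le> integral {0..m} (\<lambda>_. c1)"
        using m by (intro integral_le integrable_continuous_real continuous_on_subset[OF contG])
          (auto intro!: ub)
      ultimately have "Zw G y \<le> m * c1" using Zw_int[OF contG, of y] False m by simp
      also have "\<dots> \<le> 2 * c1" using m c1 by (simp add: mult_right_mono)
      finally show ?thesis .
    qed
  qed
  show "\<And>y. y \<in> {0..2} \<Longrightarrow> 3/4 * c0 * y \<le> Zw G y"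
  proof -
    fix y :: real assume y: "y \<in> {0..2}"
    define m where "m = min y (3/2)"
    have m: "0 \<le> m" "m \<le> y" "m \<le> 3/2" using y by (auto simp: m_def)
    have c0: "c0 \<ge> 0" using c0p by simp
    have "integral {0..m} (\<lambda>_. c0) \<le> integral {0..m} G"
      using m by (intro integral_le integrable_continuous_real continuous_on_subset[OF contG])
          (auto intro!: lb)
    also have "\<dots> \<le> integral {0..y} G"
      using m y by (intro integral_subset_le integrable_continuous_real continuous_on_subset[OF contG])
         (auto intro!: nn)
    finally have "m * c0 \<le> Zw G y" using Zw_int[OF contG, of y] y m by simp
    moreover have "3/4 * c0 * y \<le> m * c0"
    proof -
      have "3/4 * y \<le> m" using y unfolding m_def by (auto simp: min_def)
      then have "(3/4 * y) * c0 \<le> m * c0" using c0 by (rule mult_right_mono)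
      then show ?thesis by (simp add: mult_ac)
    qed
    ultimately show "3/4 * c0 * y \<le> Zw G y" by linarith
  qed
qed

lemma weight_props:
  assumes w: "weight_fn Us Hs gu Cabs eps G"
  shows "continuous_on {0..} G" "\<And>y. y \<ge> 0 \<Longrightarrow> G y \<ge> 0"
    "\<And>y. y \<in> {0..2} \<Longrightarrow> G y \<le> 2 / gamma0 Us Hs"
    "\<And>y. y \<in> {0..3/2} \<Longrightarrow> 1 / (2 * gu\<^sup>2) \<le> G y"
    "\<And>y. y \<ge> 2 \<Longrightarrow> G y = 0"
proof -
  have W: "\<exists>G'. continuous_on {0..} G' \<and> (\<forall>y\<ge>0. (G has_real_derivative G' y) (at y within {0..}))
       \<and> (\<forall>y\<in>{0..1}. G y = 1 / Gs Us Hs (y / sqrt eps))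
       \<and> (\<forall>y\<ge>2. G y = 0)
       \<and> (\<forall>y\<ge>0. G y \<ge> 0)
       \<and> (\<forall>y\<in>{0..3/2}. 1 / (2 * gu\<^sup>2) \<le> G y \<and> G y \<le> 2 / gamma0 Us Hs)
       \<and> (\<forall>y\<in>{1..3/2}. \<bar>G' y\<bar> \<le> Cabs * Mbar Us Hs * eps)
       \<and> (\<forall>y\<in>{3/2..2}. G' y \<le> 0)" using w unfolding weight_fn_def .
  then obtain G' where der: "\<forall>y\<ge>0. (G has_real_derivative G' y) (at y within {0..})"
    and dn: "\<forall>y\<in>{3/2..2}. G' y \<le> 0" by blast
  have z: "\<forall>y\<ge>2. G y = 0" using W by blast
  have nn: "\<forall>y\<ge>0. G y \<ge> 0" using W by blast
  have bd: "\<forall>y\<in>{0..3/2}. 1 / (2 * gu\<^sup>2) \<le> G y \<and> G y \<le> 2 / gamma0 Us Hs" using W by blast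
  have cont: "continuous_on {0..} G"
    unfolding continuous_on_eq_continuous_within
  proof
    fix x :: real assume "x \<in> {0..}"
    then show "continuous (at x within {0..}) G" using der by (intro DERIV_continuous) auto
  qed
  show "continuous_on {0..} G" by (rule cont)
  show "\<And>y. y \<ge> 0 \<Longrightarrow> G y \<ge> 0" using nn by blast
  show "\<And>y. y \<in> {0..3/2} \<Longrightarrow> 1 / (2 * gu\<^sup>2) \<le> G y" using bd by blast
  show "\<And>y. y \<ge> 2 \<Longrightarrow> G y = 0" using z by blast
  show "\<And>y. y \<in> {0..2} \<Longrightarrow> G y \<le> 2 / gamma0 Us Hs"
  proof -
    fix y :: real assume y: "y \<in> {0..2}"
    show "G y \<le> 2 / gamma0 Us Hs"
    proof (cases "y \<le> 3/2")
      case True then show ?thesis using bd y by simp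
    next
      case False
      have cc: "continuous_on {3/2..y} G" by (rule continuous_on_subset[OF cont]) auto
      have "G y \<le> G (3/2)"
      proof (rule DERIV_nonpos_imp_decreasing_open[OF _ _ cc])
        show "3/2 \<le> y" using False by simp
        fix x :: real assume x: "3/2 < x" "x < y"
        have x0: "x \<ge> 0" using x by simp
        have d0: "(G has_real_derivative G' x) (at x within {0..})"
          using der x0 by blast
        have "x \<in> interior {0::real..}" using x by simp
        then have "at x within {0::real..} = at x" by (rule at_within_interior)
        then have "(G has_real_derivative G' x) (at x)" using d0 by simp
        moreover have "G' x \<le> 0" using dn x y by simp
        ultimately show "\<exists>d. (G has_real_derivative d) (at x) \<and> d \<le> 0" by blast
      qed
      moreover have "G (3/2) \<le> 2 / gamma0 Us Hs" using bd by auto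
      ultimately show ?thesis by linarith
    qed
  qed
qed




lemma setint_nonneg:
  fixes f :: "'a \<Rightarrow> real"
  assumes "\<And>x. x \<in> A \<Longrightarrow> 0 \<le> f x"
  shows "0 \<le> (LINT x:A|M. f x)"
  unfolding set_lebesgue_integral_def using assms
  by (intro Bochner_Integration.integral_nonneg) (auto simp: indicator_def)

lemma meas_Zh:
  assumes hm: "set_borel_measurable lborel {0..} h" and Zm: "Z \<in> borel_measurable borel"
  shows "set_borel_measurable lborel {0..} (\<lambda>y. Z y * (cmod (h y))\<^sup>2)"
proof -
  have eq: "(\<lambda>x. indicator {0..} x *\<^sub>R (Z x * (cmod (h x))\<^sup>2)) = (\<lambda>x. Z x * (cmod (indicator {0..} x *\<^sub>R h x))\<^sup>2)"
    by (auto simp: indicator_def fun_eq_iff)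
  have m1[measurable]: "(\<lambda>x. indicator {0..} x *\<^sub>R h x) \<in> borel_measurable lborel"
    using hm unfolding set_borel_measurable_def .
  have [measurable]: "Z \<in> borel_measurable lborel" using Zm by simp
  show ?thesis unfolding set_borel_measurable_def eq by measurable
qed

lemma int_Zh:
  assumes hL: "in_L2 h" and Zm: "Z \<in> borel_measurable borel" and Z0: "\<And>y. 0 \<le> Z y" and ZK: "\<And>y. Z y \<le> K"
  shows "set_integrable lborel {0..} (\<lambda>y. Z y * (cmod (h y))\<^sup>2)"
proof -
  have hm: "set_borel_measurable lborel {0..} h" and hi: "set_integrable lborel {0..} (\<lambda>y. (cmod (h y))\<^sup>2)"
    using hL unfolding in_L2_def by auto
  have K0: "K \<ge> 0" using Z0[of 0] ZK[of 0] by simp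
  show ?thesis
  proof (rule set_integrable_bound[OF _ meas_Zh[OF hm Zm]])
    show "set_integrable lborel {0..} (\<lambda>y. K * (cmod (h y))\<^sup>2)" using hi by simp
    show "AE x in lborel. x \<in> {0..} \<longrightarrow> norm (Z x * (cmod (h x))\<^sup>2) \<le> norm (K * (cmod (h x))\<^sup>2)"
      using Z0 ZK K0 by (auto intro!: mult_right_mono simp: abs_of_nonneg)
  qed
qed

lemma L2norm_sqrtZ:
  assumes Z0: "\<And>y. 0 \<le> Z y"
  shows "L2norm (\<lambda>y. complex_of_real (sqrt (Z y)) * h y) = sqrt (LINT y:{0..}|lborel. Z y * (cmod (h y))\<^sup>2)"
proof -
  have "\<And>y. (cmod (complex_of_real (sqrt (Z y)) * h y))\<^sup>2 = Z y * (cmod (h y))\<^sup>2"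
    using Z0 by (simp add: norm_mult power_mult_distrib)
  then show ?thesis unfolding L2norm_def by simp
qed

lemma part1_int:
  fixes h :: "real \<Rightarrow> complex" and Z w :: "real \<Rightarrow> real"
  assumes hL: "in_L2 h" and Zm: "Z \<in> borel_measurable borel" and Z0: "\<And>y. 0 \<le> Z y" and ZK: "\<And>y. Z y \<le> K"
    and wb: "\<And>y. y \<ge> 0 \<Longrightarrow> 0 \<le> w y \<and> w y \<le> A * (sqrt (Z y) + B)" and A: "A \<ge> 0" and B: "B \<ge> 0"
  shows "L2norm (\<lambda>y. complex_of_real (w y) * h y)
     \<le> sqrt 2 * A * (L2norm (\<lambda>y. complex_of_real (sqrt (Z y)) * h y) + B * L2norm h)"
proof -
  have hi: "set_integrable lborel {0..} (\<lambda>y. (cmod (h y))\<^sup>2)"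
    using hL unfolding in_L2_def by auto
  have zi: "set_integrable lborel {0..} (\<lambda>y. Z y * (cmod (h y))\<^sup>2)" by (rule int_Zh[OF hL Zm Z0 ZK])
  define NZ where "NZ = (LINT y:{0..}|lborel. Z y * (cmod (h y))\<^sup>2)"
  define N0 where "N0 = (LINT y:{0..}|lborel. (cmod (h y))\<^sup>2)"
  have NZ0: "NZ \<ge> 0" unfolding NZ_def using Z0 by (intro setint_nonneg) auto
  have N00: "N0 \<ge> 0" unfolding N0_def by (intro setint_nonneg) auto
  have e1: "L2norm (\<lambda>y. complex_of_real (sqrt (Z y)) * h y) = sqrt NZ"
    unfolding NZ_def by (rule L2norm_sqrtZ[OF Z0])
  have e2: "L2norm h = sqrt N0" unfolding L2norm_def N0_def ..
  have rhs0: "0 \<le> sqrt 2 * A * (sqrt NZ + B * sqrt N0)" using A B NZ0 N00 by simp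
  define g where "g = (\<lambda>y. (2*A\<^sup>2) * (Z y * (cmod (h y))\<^sup>2) + (2*A\<^sup>2*B\<^sup>2) * (cmod (h y))\<^sup>2)"
  have gi: "set_integrable lborel {0..} g" unfolding g_def using zi hi by (intro set_integral_add) auto
  have gI: "(LINT y:{0..}|lborel. g y) = 2*A\<^sup>2 * (NZ + B\<^sup>2 * N0)"
  proof -
    have "(LINT y:{0..}|lborel. g y) = (LINT y:{0..}|lborel. (2*A\<^sup>2) * (Z y * (cmod (h y))\<^sup>2))
       + (LINT y:{0..}|lborel. (2*A\<^sup>2*B\<^sup>2) * (cmod (h y))\<^sup>2)"
      unfolding g_def by (rule set_integral_add(2)) (use zi hi in auto)
    also have "\<dots> = 2*A\<^sup>2 * NZ + (2*A\<^sup>2*B\<^sup>2) * N0"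
      unfolding NZ_def N0_def by (simp only: set_integral_mult_right)
    finally show ?thesis by (simp add: algebra_simps)
  qed
  have pw: "(cmod (complex_of_real (w y) * h y))\<^sup>2 \<le> g y" if y: "y \<in> {0..}" for y
  proof -
    have w: "0 \<le> w y" "w y \<le> A * (sqrt (Z y) + B)" using wb y by auto
    have "(cmod (complex_of_real (w y) * h y))\<^sup>2 = (w y)\<^sup>2 * (cmod (h y))\<^sup>2"
      by (simp add: norm_mult power_mult_distrib)
    also have "\<dots> \<le> (A * (sqrt (Z y) + B))\<^sup>2 * (cmod (h y))\<^sup>2"
      using w by (intro mult_right_mono power_mono) auto
    also have "\<dots> \<le> (2*A\<^sup>2 * (Z y + B\<^sup>2)) * (cmod (h y))\<^sup>2"
    proof (intro mult_right_mono)
      have s: "(sqrt (Z y))\<^sup>2 = Z y" using Z0 by simp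
      have a: "(sqrt (Z y) + B)\<^sup>2 \<le> 2 * (Z y + B\<^sup>2)"
        using s by (smt (verit) sum_squares_bound power2_sum)
      show "(A * (sqrt (Z y) + B))\<^sup>2 \<le> 2*A\<^sup>2 * (Z y + B\<^sup>2)"
      proof -
        have "(A * (sqrt (Z y) + B))\<^sup>2 = A\<^sup>2 * (sqrt (Z y) + B)\<^sup>2" by (simp only: power_mult_distrib)
        also have "\<dots> \<le> A\<^sup>2 * (2 * (Z y + B\<^sup>2))"
          by (rule mult_left_mono[OF a]) simp
        also have "\<dots> = 2*A\<^sup>2 * (Z y + B\<^sup>2)" by (simp add: mult_ac)
        finally show ?thesis .
      qed
    qed simp
    also have "\<dots> = g y" unfolding g_def by (simp add: algebra_simps)
    finally show ?thesis .
  qed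
  show ?thesis
  proof (cases "set_integrable lborel {0..} (\<lambda>y. (cmod (complex_of_real (w y) * h y))\<^sup>2)")
    case True
    have "(LINT y:{0..}|lborel. (cmod (complex_of_real (w y) * h y))\<^sup>2) \<le> (LINT y:{0..}|lborel. g y)"
      by (rule set_integral_mono[OF True gi pw])
    then have "L2norm (\<lambda>y. complex_of_real (w y) * h y) \<le> sqrt (2*A\<^sup>2 * (NZ + B\<^sup>2 * N0))"
      unfolding L2norm_def gI by simp
    also have "\<dots> = sqrt 2 * A * sqrt (NZ + B\<^sup>2 * N0)" using A by (simp add: real_sqrt_mult)
    also have "\<dots> \<le> sqrt 2 * A * (sqrt NZ + B * sqrt N0)"
    proof (intro mult_left_mono)
      have "sqrt (NZ + B\<^sup>2 * N0) \<le> sqrt NZ + sqrt (B\<^sup>2 * N0)" using NZ0 N00 B by (simp add: sqrt_add_le_add_sqrt)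
      also have "sqrt (B\<^sup>2 * N0) = B * sqrt N0" using B by (simp add: real_sqrt_mult)
      finally show "sqrt (NZ + B\<^sup>2 * N0) \<le> sqrt NZ + B * sqrt N0" .
    qed (use A in auto)
    finally show ?thesis unfolding e1 e2 .
  next
    case False
    then have "L2norm (\<lambda>y. complex_of_real (w y) * h y) = 0"
      unfolding L2norm_def set_lebesgue_integral_def set_integrable_def
      by (simp add: not_integrable_integral_eq)
    then show ?thesis using rhs0 unfolding e1 e2 by simp
  qed
qed




lemma setint_norm:
  fixes f :: "'a \<Rightarrow> 'b::{banach, second_countable_topology}"
  shows "norm (LINT x:A|M. f x) \<le> (LINT x:A|M. norm (f x))"
proof -
  have "norm (LINT x:A|M. f x) \<le> (\<integral>x. norm (indicator A x *\<^sub>R f x) \<partial>M)"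
    unfolding set_lebesgue_integral_def by (rule integral_norm_bound)
  also have "(\<lambda>x. norm (indicator A x *\<^sub>R f x)) = (\<lambda>x. indicator A x *\<^sub>R norm (f x))"
    by (auto simp: indicator_def fun_eq_iff)
  finally show ?thesis unfolding set_lebesgue_integral_def .
qed

lemma setint_mono_nn:
  fixes f g :: "'a \<Rightarrow> real"
  assumes g: "set_integrable M A g" and fg: "\<And>x. x \<in> A \<Longrightarrow> 0 \<le> f x \<and> f x \<le> g x"
  shows "(LINT x:A|M. f x) \<le> (LINT x:A|M. g x)"
proof (cases "set_integrable M A f")
  case True then show ?thesis using g fg by (intro set_integral_mono) auto
next
  case False
  then have "(LINT x:A|M. f x) = 0"
    unfolding set_lebesgue_integral_def set_integrable_def by (simp add: not_integrable_integral_eq)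
  moreover have "0 \<le> (LINT x:A|M. g x)" using fg by (intro setint_nonneg) (meson order_trans)
  ultimately show ?thesis by simp
qed

lemma setint_subset_le:
  fixes f :: "'a \<Rightarrow> real"
  assumes f: "set_integrable M A f" and B: "B \<in> sets M" "B \<subseteq> A" and nn: "\<And>x. x \<in> A \<Longrightarrow> 0 \<le> f x"
  shows "(LINT x:B|M. f x) \<le> (LINT x:A|M. f x)"
proof -
  have fB: "set_integrable M B f" by (rule set_integrable_subset[OF f B])
  show ?thesis unfolding set_lebesgue_integral_def
    using f fB unfolding set_integrable_def
    by (intro integral_mono) (use B nn in \<open>auto simp: indicator_def\<close>)
qed

lemma ftc_inv:
  fixes g k y :: real
  assumes g: "g > 0" and k: "k > 0" and y: "y \<ge> 0"
  shows "(LINT s:{0..y}|lborel. 1 / (g * s + k)) = ln (1 + g * y / k) / g"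
    "set_integrable lborel {0..y} (\<lambda>s. 1 / (g * s + k))"
proof -
  have cont: "continuous_on {0..y} (\<lambda>s. 1 / (g * s + k))"
  proof -
    have "\<And>s. s \<in> {0..y} \<Longrightarrow> g * s + k \<noteq> 0"
    proof -
      fix s assume "s \<in> {0..y}"
      then have "0 \<le> g * s" using g by simp
      then show "g * s + k \<noteq> 0" using k by linarith
    qed
    then show ?thesis by (intro continuous_intros) auto
  qed
  show "set_integrable lborel {0..y} (\<lambda>s. 1 / (g * s + k))"
    by (rule borel_integrable_atLeastAtMost'[OF cont])
  have "(LINT s:{0..y}|lborel. 1 / (g * s + k)) = ln (g * y + k) / g - ln (g * 0 + k) / g"
    unfolding set_lebesgue_integral_def
  proof (rule integral_FTC_atLeastAtMost[OF y _ cont])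
    fix x :: real assume x: "0 \<le> x" "x \<le> y"
    have "0 \<le> g * x" using g x by simp
    then have pos: "g * x + k > 0" using k by linarith
    have "((\<lambda>s. ln (g * s + k) / g) has_real_derivative (1 / (g * x + k) * g) / g) (at x)"
      using pos by (auto intro!: derivative_eq_intros)
    then have "((\<lambda>s. ln (g * s + k) / g) has_real_derivative 1 / (g * x + k)) (at x)"
      using g by simp
    then show "((\<lambda>s. ln (g * s + k) / g) has_vector_derivative 1 / (g * x + k)) (at x within {0..y})"
      by (simp add: has_real_derivative_iff_has_vector_derivative[symmetric] has_field_derivative_at_within)
  qed
  also have "\<dots> = (ln (g * y + k) - ln k) / g" by (simp add: diff_divide_distrib)
  also have "ln (g * y + k) - ln k = ln (1 + g * y / k)"
  proof -
    have "0 \<le> g * y" using g y by simp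
    then have pos: "g * y + k > 0" using k by linarith
    have "1 + g * y / k = (g * y + k) / k" using k by (simp add: field_simps)
    then have "ln (1 + g * y / k) = ln ((g * y + k) / k)" by simp
    also have "\<dots> = ln (g * y + k) - ln k" using pos k by (simp add: ln_div)
    finally show ?thesis by simp
  qed
  finally show "(LINT s:{0..y}|lborel. 1 / (g * s + k)) = ln (1 + g * y / k) / g" .
qed




lemma amgm:
  fixes l q t :: real
  assumes l: "l > 0" and q: "q > 0"
  shows "t \<le> l / (2*q) + q * t\<^sup>2 / (2*l)"
proof -
  have e: "l / (2*q) + q * t\<^sup>2 / (2*l) - t = (l - q*t)\<^sup>2 / (2*l*q)"
    using l q by (simp add: field_simps power2_eq_square)
  have "0 \<le> (l - q*t)\<^sup>2 / (2*l*q)" using l q by simp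
  then show ?thesis using e by linarith
qed

lemma prim_bound:
  fixes h :: "real \<Rightarrow> complex" and Z :: "real \<Rightarrow> real"
  assumes hL: "in_L2 h" and Zm: "Z \<in> borel_measurable borel" and Z0: "\<And>y. 0 \<le> Z y"
    and ZK: "\<And>y. Z y \<le> K" and Zlb: "\<And>s. s \<in> {0..2} \<Longrightarrow> g * s \<le> Z s"
    and g: "g > 0" and k: "k > 0" and y: "y \<in> {0..2}"
  shows "cmod (prim h y) \<le> sqrt (ln (1 + g*y/k) / g *
     ((LINT s:{0..}|lborel. Z s * (cmod (h s))\<^sup>2) + k * (LINT s:{0..}|lborel. (cmod (h s))\<^sup>2)))"
proof -
  define NZ where "NZ = (LINT s:{0..}|lborel. Z s * (cmod (h s))\<^sup>2)"
  define N0 where "N0 = (LINT s:{0..}|lborel. (cmod (h s))\<^sup>2)"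
  define M where "M = NZ + k * N0"
  define ell where "ell = ln (1 + g*y/k) / g"
  have y0: "0 \<le> y" "y \<le> 2" using y by auto
  have hi: "set_integrable lborel {0..} (\<lambda>y. (cmod (h y))\<^sup>2)"
    using hL unfolding in_L2_def by auto
  have zi: "set_integrable lborel {0..} (\<lambda>y. Z y * (cmod (h y))\<^sup>2)" by (rule int_Zh[OF hL Zm Z0 ZK])
  have NZ0: "NZ \<ge> 0" unfolding NZ_def using Z0 by (intro setint_nonneg) auto
  have N00: "N0 \<ge> 0" unfolding N0_def by (intro setint_nonneg) auto
  have M0: "M \<ge> 0" unfolding M_def using NZ0 N00 k by simp
  have ell0: "ell \<ge> 0" unfolding ell_def using g k y0 by simp
  have feq: "(\<lambda>s. (Z s + k) * (cmod (h s))\<^sup>2) = (\<lambda>s. Z s * (cmod (h s))\<^sup>2 + k * (cmod (h s))\<^sup>2)"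
    by (simp add: fun_eq_iff distrib_right)
  have zki: "set_integrable lborel {0..} (\<lambda>s. (Z s + k) * (cmod (h s))\<^sup>2)"
    unfolding feq using zi hi by (intro set_integral_add(1)) auto
  have zkI: "(LINT s:{0..}|lborel. (Z s + k) * (cmod (h s))\<^sup>2) = M"
    unfolding feq M_def NZ_def N0_def
    by (subst set_integral_add(2)) (use zi hi in auto)
  have zkiy: "set_integrable lborel {0..y} (\<lambda>s. (Z s + k) * (cmod (h s))\<^sup>2)"
    by (rule set_integrable_subset[OF zki]) auto
  have zkIy: "(LINT s:{0..y}|lborel. (Z s + k) * (cmod (h s))\<^sup>2) \<le> M"
    unfolding zkI[symmetric] by (rule setint_subset_le[OF zki]) (use Z0 k in \<open>auto intro!: add_nonneg_nonneg\<close>)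
  have I1: "cmod (prim h y) \<le> (LINT s:{0..y}|lborel. cmod (h s))"
    unfolding prim_def by (rule setint_norm)
  have I2: "(LINT s:{0..y}|lborel. cmod (h s)) \<le> l * (ell/2) + (M/2) / l" if l: "l > 0" for l
  proof -
    define r where "r = (\<lambda>s. (l/2) * (1 / (g * s + k)) + (1/(2*l)) * ((Z s + k) * (cmod (h s))\<^sup>2))"
    have a1: "set_integrable lborel {0..y} (\<lambda>s. (l/2) * (1 / (g * s + k)))"
      by (rule set_integrable_mult_right) (rule ftc_inv(2)[OF g k y0(1)])
    have a2: "set_integrable lborel {0..y} (\<lambda>s. (1/(2*l)) * ((Z s + k) * (cmod (h s))\<^sup>2))"
      by (rule set_integrable_mult_right) (rule zkiy)
    have ri: "set_integrable lborel {0..y} r" unfolding r_def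
      by (rule set_integral_add(1)[OF a1 a2])
    have rI: "(LINT s:{0..y}|lborel. r s) = (l/2) * ell + (1/(2*l)) * (LINT s:{0..y}|lborel. (Z s + k) * (cmod (h s))\<^sup>2)"
    proof -
      have "(LINT s:{0..y}|lborel. r s) = (LINT s:{0..y}|lborel. (l/2) * (1 / (g * s + k)))
          + (LINT s:{0..y}|lborel. (1/(2*l)) * ((Z s + k) * (cmod (h s))\<^sup>2))"
        unfolding r_def by (rule set_integral_add(2)[OF a1 a2])
      also have "\<dots> = (l/2) * (LINT s:{0..y}|lborel. (1 / (g * s + k)))
          + (1/(2*l)) * (LINT s:{0..y}|lborel. ((Z s + k) * (cmod (h s))\<^sup>2))"
        by (simp only: set_integral_mult_right)
      finally show ?thesis unfolding ftc_inv(1)[OF g k y0(1)] ell_def .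
    qed
    have pw: "0 \<le> cmod (h s) \<and> cmod (h s) \<le> r s" if s: "s \<in> {0..y}" for s
    proof -
      have s2: "s \<in> {0..2}" using s y0 by auto
      have q: "Z s + k > 0" using Z0[of s] k by linarith
      have gs: "0 \<le> g * s" using g s by simp
      have gsk: "g * s + k > 0" using gs k by linarith
      have le: "g * s + k \<le> Z s + k" using Zlb[OF s2] by simp
      have "1 / (Z s + k) \<le> 1 / (g * s + k)" using gsk le by (simp add: divide_simps)
      then have "(l/2) * (1 / (Z s + k)) \<le> (l/2) * (1 / (g * s + k))"
        using l by (intro mult_left_mono) auto
      moreover have "l / (2 * (Z s + k)) = (l/2) * (1 / (Z s + k))" by simp
      ultimately have "l / (2 * (Z s + k)) \<le> (l/2) * (1 / (g * s + k))" by simp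
      moreover have "cmod (h s) \<le> l / (2 * (Z s + k)) + (Z s + k) * (cmod (h s))\<^sup>2 / (2 * l)"
        by (rule amgm[OF l q])
      ultimately show ?thesis unfolding r_def by simp
    qed
    have "(LINT s:{0..y}|lborel. cmod (h s)) \<le> (LINT s:{0..y}|lborel. r s)"
      by (rule setint_mono_nn[OF ri pw])
    also have "\<dots> \<le> (l/2) * ell + (1/(2*l)) * M" unfolding rI
      using zkIy l by (intro add_left_mono mult_left_mono) auto
    also have "\<dots> = l * (ell/2) + (M/2) / l" by simp
    finally show ?thesis .
  qed
  have "(LINT s:{0..y}|lborel. cmod (h s)) \<le> 2 * sqrt ((ell/2) * (M/2))"
    by (rule lam_bound) (use ell0 M0 I2 in auto)
  also have "2 * sqrt ((ell/2) * (M/2)) = sqrt (ell * M)"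
  proof -
    have "(ell/2) * (M/2) = (ell * M) / 4" by simp
    then have "sqrt ((ell/2) * (M/2)) = sqrt (ell * M) / 2" by (simp add: real_sqrt_divide)
    then show ?thesis by simp
  qed
  finally show ?thesis using I1 unfolding ell_def M_def NZ_def N0_def by linarith
qed

lemma amgm2:
  fixes l z a b :: real
  assumes l: "l > 0" and z: "z > 0"
  shows "a * b \<le> l * (z * a\<^sup>2) + (1/(4*l)) * (b\<^sup>2 / z)"
proof -
  have e: "l * (z * a\<^sup>2) + (1/(4*l)) * (b\<^sup>2 / z) - a * b = (2*l*z*a - b)\<^sup>2 / (4*l*z)"
    using l z by (simp add: field_simps power2_eq_square)
  have "0 \<le> (2*l*z*a - b)\<^sup>2 / (4*l*z)" using l z by simp
  then show ?thesis using e by linarith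
qed

lemma ratio_bound:
  fixes y k La m :: real
  assumes y: "y > 0" and k: "k > 0" and La: "La \<ge> 0"
  shows "min (y/k) La / y \<le> 2 * max 1 La / (y + k)"
proof (cases "y \<le> k")
  case True
  have "min (y/k) La / y \<le> (y/k) / y" using y by (intro divide_right_mono) auto
  also have "\<dots> = 1 / k" using y by simp
  also have "\<dots> \<le> 2 / (y + k)" using True y k by (simp add: divide_simps)
  also have "\<dots> \<le> 2 * max 1 La / (y + k)" using y k by (intro divide_right_mono) auto
  finally show ?thesis .
next
  case False
  have "min (y/k) La / y \<le> La / y" using y by (intro divide_right_mono) auto
  also have "\<dots> \<le> 2 * La / (y + k)"
  proof -
    have "La * (y + k) \<le> La * (2 * y)" using False La by (intro mult_left_mono) auto
    then show ?thesis using False y k by (simp add: divide_simps mult_ac)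
  qed
  also have "\<dots> \<le> 2 * max 1 La / (y + k)" using y k by (intro divide_right_mono) auto
  finally show ?thesis .
qed




lemma part2:
  fixes h R :: "real \<Rightarrow> complex" and Z :: "real \<Rightarrow> real"
  assumes hL: "in_L2 h" and RL: "in_L2 R" and Rs: "\<And>y. y \<notin> {0..2} \<Longrightarrow> R y = 0"
    and Zm: "Z \<in> borel_measurable borel" and Z0: "\<And>y. 0 \<le> Z y"
    and ZK: "\<And>y. Z y \<le> K" and Zlb: "\<And>s. s \<in> {0..2} \<Longrightarrow> g * s \<le> Z s"
    and g: "g > 0" and k: "k > 0"
  shows "cmod (inner0 R (prim h)) \<le> sqrt (2 * max 1 (ln (1 + 2*g/k) / g) * ln (1 + 2/k) / g)
     * L2norm (\<lambda>y. complex_of_real (sqrt (Z y)) * R y)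
     * (L2norm (\<lambda>y. complex_of_real (sqrt (Z y)) * h y) + sqrt k * L2norm h)"
proof -
  define NZ where "NZ = (LINT s:{0..}|lborel. Z s * (cmod (h s))\<^sup>2)"
  define N0 where "N0 = (LINT s:{0..}|lborel. (cmod (h s))\<^sup>2)"
  define M where "M = NZ + k * N0"
  define La where "La = ln (1 + 2*g/k) / g"
  define AR where "AR = (LINT s:{0..}|lborel. Z s * (cmod (R s))\<^sup>2)"
  define c where "c = 2 * M * max 1 La / g"
  define Phi where "Phi = (\<lambda>y. sqrt (M * min (y/k) La))"
  define Psi where "Psi = (\<lambda>y. indicator {..2} y * (c * (1 / (y + k))))"
  have NZ0: "NZ \<ge> 0" unfolding NZ_def using Z0 by (intro setint_nonneg) auto
  have N00: "N0 \<ge> 0" unfolding N0_def by (intro setint_nonneg) auto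
  have M0: "M \<ge> 0" unfolding M_def using NZ0 N00 k by simp
  have La0: "La \<ge> 0" unfolding La_def using g k by simp
  have AR0: "AR \<ge> 0" unfolding AR_def using Z0 by (intro setint_nonneg) auto
  have c0: "c \<ge> 0" unfolding c_def using M0 g by simp
  have ARi: "set_integrable lborel {0..} (\<lambda>y. Z y * (cmod (R y))\<^sup>2)" by (rule int_Zh[OF RL Zm Z0 ZK])
  have FPhi: "cmod (prim h y) \<le> Phi y" if y: "y \<in> {0..2}" for y
  proof -
    have y0: "0 \<le> y" "y \<le> 2" using y by auto
    have "cmod (prim h y) \<le> sqrt (ln (1 + g*y/k) / g * M)"
      using prim_bound[OF hL Zm Z0 ZK Zlb g k y] unfolding M_def NZ_def N0_def .
    also have "\<dots> \<le> Phi y" unfolding Phi_def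
    proof (intro real_sqrt_le_mono)
      have gy: "0 \<le> g * y / k" using g k y0 by simp
      have "ln (1 + g*y/k) / g \<le> (g*y/k) / g"
        using ln_add_one_self_le_self[OF gy] g by (intro divide_right_mono) auto
      also have "\<dots> = y / k" using g by simp
      finally have e1: "ln (1 + g*y/k) / g \<le> y / k" .
      have "1 + g*y/k \<le> 1 + 2*g/k" using g k y0 by (simp add: divide_right_mono)
      then have "ln (1 + g*y/k) \<le> ln (1 + 2*g/k)" using gy by simp
      then have e2: "ln (1 + g*y/k) / g \<le> La" unfolding La_def using g by (intro divide_right_mono) auto
      have "ln (1 + g*y/k) / g \<le> min (y/k) La" using e1 e2 by simp
      then have "ln (1 + g*y/k) / g * M \<le> min (y/k) La * M" using M0 by (rule mult_right_mono)
      then show "ln (1 + g*y/k) / g * M \<le> M * min (y/k) La" by (simp add: mult.commute)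
    qed
    finally show ?thesis .
  qed
  have fi: "set_integrable lborel {0..2} (\<lambda>y. 1 / (y + k))"
    using ftc_inv(2)[OF zero_less_one k, of 2] by simp
  have fI: "(LINT y:{0..2}|lborel. 1 / (y + k)) = ln (1 + 2/k)"
    using ftc_inv(1)[OF zero_less_one k, of 2] by simp
  have ind: "\<And>f :: real \<Rightarrow> real. (\<lambda>y. indicator {0..} y *\<^sub>R (indicator {..2} y * f y)) = (\<lambda>y. indicator {0..2} y *\<^sub>R f y)"
    by (auto simp: indicator_def fun_eq_iff)
  have Psii: "set_integrable lborel {0..} Psi"
  proof -
    have "set_integrable lborel {0..2} (\<lambda>y. c * (1 / (y + k)))" using fi by (rule set_integrable_mult_right)
    then show ?thesis unfolding set_integrable_def Psi_def ind .
  qed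
  have PsiI: "(LINT y:{0..}|lborel. Psi y) = c * ln (1 + 2/k)"
  proof -
    have "(LINT y:{0..}|lborel. Psi y) = (LINT y:{0..2}|lborel. c * (1 / (y + k)))"
      unfolding set_lebesgue_integral_def Psi_def ind ..
    also have "\<dots> = c * ln (1 + 2/k)" by (simp only: set_integral_mult_right fI)
    finally show ?thesis .
  qed
  have PsiI0: "0 \<le> c * ln (1 + 2/k)" using c0 k by simp
  have main: "(LINT y:{0..}|lborel. cmod (R y * cnj (prim h y))) \<le> l * AR + ((c * ln (1 + 2/k)) / 4) / l"
    if l: "l > 0" for l
  proof -
    define r where "r = (\<lambda>y. l * (Z y * (cmod (R y))\<^sup>2) + (1/(4*l)) * Psi y)"
    have a1: "set_integrable lborel {0..} (\<lambda>y. l * (Z y * (cmod (R y))\<^sup>2))"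
      by (rule set_integrable_mult_right) (rule ARi)
    have a2: "set_integrable lborel {0..} (\<lambda>y. (1/(4*l)) * Psi y)"
      by (rule set_integrable_mult_right) (rule Psii)
    have ri: "set_integrable lborel {0..} r" unfolding r_def by (rule set_integral_add(1)[OF a1 a2])
    have rI: "(LINT y:{0..}|lborel. r y) = l * AR + ((c * ln (1 + 2/k)) / 4) / l"
    proof -
      have "(LINT y:{0..}|lborel. r y) = (LINT y:{0..}|lborel. l * (Z y * (cmod (R y))\<^sup>2))
          + (LINT y:{0..}|lborel. (1/(4*l)) * Psi y)"
        unfolding r_def by (rule set_integral_add(2)[OF a1 a2])
      also have "\<dots> = l * AR + (1/(4*l)) * (c * ln (1 + 2/k))"
        unfolding AR_def PsiI[symmetric] by (simp only: set_integral_mult_right)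
      finally show ?thesis by simp
    qed
    have Psi0: "0 \<le> Psi y" if "y \<ge> 0" for y
      unfolding Psi_def using c0 k that by (auto simp: indicator_def)
    have pw: "0 \<le> cmod (R y * cnj (prim h y)) \<and> cmod (R y * cnj (prim h y)) \<le> r y" if y: "y \<in> {0..}" for y
    proof -
      have r0: "0 \<le> r y" unfolding r_def using l Z0[of y] Psi0[of y] y by simp
      have eq: "cmod (R y * cnj (prim h y)) = cmod (R y) * cmod (prim h y)" by (simp add: norm_mult)
      show ?thesis
      proof (cases "y \<in> {0..2}")
        case False
        then show ?thesis using Rs r0 by simp
      next
        case True
        have le1: "cmod (R y) * cmod (prim h y) \<le> cmod (R y) * Phi y"
          using FPhi[OF True] by (intro mult_left_mono) auto
        show ?thesis
        proof (cases "y = 0")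
          case True
          have "Phi y = 0" unfolding Phi_def using True La0 by simp
          then show ?thesis using le1 eq r0 by simp
        next
          case False
          then have yp: "y > 0" using y by simp
          have y2: "y \<le> 2" using \<open>y \<in> {0..2}\<close> by simp
          have zp: "Z y > 0" using Zlb[OF \<open>y \<in> {0..2}\<close>] g yp by (smt (verit) mult_pos_pos)
          have "cmod (R y) * Phi y \<le> l * (Z y * (cmod (R y))\<^sup>2) + (1/(4*l)) * ((Phi y)\<^sup>2 / Z y)"
            by (rule amgm2[OF l zp])
          also have "(Phi y)\<^sup>2 / Z y \<le> Psi y"
          proof -
            have mm: "0 \<le> M * min (y/k) La" using M0 La0 yp k by simp
            have "(Phi y)\<^sup>2 = M * min (y/k) La" unfolding Phi_def using mm by simp
            moreover have "M * min (y/k) La / Z y \<le> M * min (y/k) La / (g * y)"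
              by (rule divide_left_mono[OF Zlb[OF \<open>y \<in> {0..2}\<close>] mm]) (use zp g yp in simp)
            ultimately have "(Phi y)\<^sup>2 / Z y \<le> M * min (y/k) La / (g * y)" by simp
            also have "\<dots> = (M / g) * (min (y/k) La / y)" by simp
            also have "\<dots> \<le> (M / g) * (2 * max 1 La / (y + k))"
              using ratio_bound[OF yp k La0] M0 g by (intro mult_left_mono) auto
            also have "\<dots> = Psi y" unfolding Psi_def c_def using y2 by (simp add: indicator_def)
            finally show ?thesis .
          qed
          then have "l * (Z y * (cmod (R y))\<^sup>2) + (1/(4*l)) * ((Phi y)\<^sup>2 / Z y) \<le> r y"
            unfolding r_def using l by (intro add_left_mono mult_left_mono) auto
          finally show ?thesis using le1 eq by simp
        qed
      qed
    qed
    have "(LINT y:{0..}|lborel. cmod (R y * cnj (prim h y))) \<le> (LINT y:{0..}|lborel. r y)"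
      by (rule setint_mono_nn[OF ri pw])
    then show ?thesis unfolding rI .
  qed
  have "(LINT y:{0..}|lborel. cmod (R y * cnj (prim h y))) \<le> 2 * sqrt (AR * ((c * ln (1 + 2/k)) / 4))"
    by (rule lam_bound) (use AR0 PsiI0 main in auto)
  also have "2 * sqrt (AR * ((c * ln (1 + 2/k)) / 4)) = sqrt AR * sqrt (c * ln (1 + 2/k))"
  proof -
    have "AR * ((c * ln (1 + 2/k)) / 4) = (AR * (c * ln (1 + 2/k))) / 4" by simp
    then have "sqrt (AR * ((c * ln (1 + 2/k)) / 4)) = sqrt (AR * (c * ln (1 + 2/k))) / 2"
      by (simp add: real_sqrt_divide)
    then show ?thesis by (simp add: real_sqrt_mult)
  qed
  also have "sqrt (c * ln (1 + 2/k)) = sqrt (2 * max 1 La * ln (1 + 2/k) / g) * sqrt M"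
  proof -
    have "c * ln (1 + 2/k) = (2 * max 1 La * ln (1 + 2/k) / g) * M" unfolding c_def by simp
    then show ?thesis by (simp only: real_sqrt_mult)
  qed
  also have "sqrt M \<le> sqrt NZ + sqrt k * sqrt N0"
  proof -
    have "sqrt M \<le> sqrt NZ + sqrt (k * N0)" unfolding M_def using NZ0 N00 k
      by (simp add: sqrt_add_le_add_sqrt)
    then show ?thesis by (simp add: real_sqrt_mult)
  qed
  then have "sqrt AR * (sqrt (2 * max 1 La * ln (1 + 2/k) / g) * sqrt M)
     \<le> sqrt AR * (sqrt (2 * max 1 La * ln (1 + 2/k) / g) * (sqrt NZ + sqrt k * sqrt N0))"
  proof -
    have "0 \<le> 2 * max 1 La * ln (1 + 2 / k) / g" using g k by simp
    then show ?thesis using \<open>sqrt M \<le> _\<close> AR0 by (intro mult_left_mono) auto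
  qed
  finally have X: "(LINT y:{0..}|lborel. cmod (R y * cnj (prim h y)))
     \<le> sqrt AR * (sqrt (2 * max 1 La * ln (1 + 2/k) / g) * (sqrt NZ + sqrt k * sqrt N0))" .
  have "cmod (inner0 R (prim h)) \<le> (LINT y:{0..}|lborel. cmod (R y * cnj (prim h y)))"
    unfolding inner0_def by (rule setint_norm)
  also note X
  also have "sqrt AR * (sqrt (2 * max 1 La * ln (1 + 2/k) / g) * (sqrt NZ + sqrt k * sqrt N0))
     = sqrt (2 * max 1 (ln (1 + 2*g/k) / g) * ln (1 + 2/k) / g)
     * L2norm (\<lambda>y. complex_of_real (sqrt (Z y)) * R y)
     * (L2norm (\<lambda>y. complex_of_real (sqrt (Z y)) * h y) + sqrt k * L2norm h)"
    unfolding L2norm_sqrtZ[OF Z0] AR_def NZ_def N0_def La_def L2norm_def by simp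
  finally show ?thesis .
qed




lemma fin_aux:
  fixes X s e c C0 Lq :: real
  assumes "0 \<le> s" "0 \<le> e" "0 \<le> c" "c \<le> C0" "1 \<le> Lq" "X \<le> c * Lq * s \<or> X \<le> c * e"
  shows "X \<le> C0 * Lq * (s + e)"
proof -
  have "c * Lq * s \<le> C0 * Lq * s" using assms by (intro mult_right_mono) auto
  moreover have "C0 * Lq * s \<le> C0 * Lq * (s + e)" using assms by (intro mult_left_mono) auto
  moreover have "c * e \<le> C0 * e" using assms by (intro mult_right_mono) auto
  moreover have "C0 * e \<le> C0 * Lq * e" using assms
    by (metis mult.commute mult_le_cancel_left1 mult_left_mono order.trans mult.assoc order_refl mult_right_mono)
  moreover have "C0 * Lq * e \<le> C0 * Lq * (s + e)" using assms by (intro mult_left_mono) auto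
  ultimately show ?thesis using assms by linarith
qed

lemma pw1:
  fixes z eps p b K L :: real
  assumes p: "p \<ge> 1" and b: "b > 0" and K: "K \<ge> 1" and e: "0 < eps" "eps < 1"
    and L: "L = - ln eps" "L \<ge> 1" and z: "0 \<le> z" "z \<le> K"
  shows "sqrt z * \<bar>ln z\<bar> powr p \<le> ((4*p) powr p + (4*b) powr p + K powr p) * L powr p * (sqrt z + eps powr b)"
proof -
  define C0 where "C0 = (4*p) powr p + (4*b) powr p + K powr p"
  have Lp: "L powr p \<ge> 1" using L p by (simp add: ge_one_powr_ge_zero)
  have C0nn: "(4*p) powr p \<ge> 0" "(4*b) powr p \<ge> 0" "K powr p \<ge> 0" by auto
  have eb: "eps powr b \<ge> 0" by simp
  have sz: "sqrt z \<ge> 0" using z by simp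
  consider "z = 0" | "0 < z" "z \<le> eps powr (4*b)" | "eps powr (4*b) \<le> z" "z \<le> 1" | "1 \<le> z" "z \<le> K"
    using z by linarith
  then have "sqrt z * \<bar>ln z\<bar> powr p \<le> C0 * L powr p * (sqrt z + eps powr b)"
  proof cases
    case 1
    then show ?thesis using C0nn Lp eb unfolding C0_def by simp
  next
    case 2
    define a where "a = 1 / (4*p)"
    have a: "a > 0" using p by (simp add: a_def)
    have ep1: "eps powr (4*b) \<le> 1" using e b by (intro powr_le1) auto
    have iz: "1 \<le> 1/z" using 2 ep1 by simp
    have "\<bar>ln z\<bar> = ln (1/z)" using 2 iz by (simp add: ln_div)
    also have "\<dots> \<le> (1/z) powr a / a" by (rule ln_powr_bound[OF iz a])
    finally have l1: "\<bar>ln z\<bar> \<le> (1/z) powr a / a" .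
    have "\<bar>ln z\<bar> powr p \<le> ((1/z) powr a / a) powr p"
      using l1 p by (intro powr_mono2) auto
    also have "\<dots> = ((1/z) powr a) powr p / a powr p"
      using a 2 by (simp add: powr_divide powr_mult)
    also have "\<dots> = (1/z) powr (1/4) * (4*p) powr p"
      using a p 2 by (simp add: powr_powr a_def powr_divide)
    finally have l2: "\<bar>ln z\<bar> powr p \<le> (1/z) powr (1/4) * (4*p) powr p" .
    have sq: "sqrt z * (1/z) powr (1/4) = z powr (1/4)"
    proof -
      have "sqrt z * (1/z) powr (1/4) = z powr (1/2) * z powr (-(1/4))"
        using 2 by (simp add: powr_half_sqrt powr_minus_divide powr_divide)
      also have "\<dots> = z powr (1/4)" using 2 by (simp add: powr_add[symmetric])
      finally show ?thesis .
    qed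
    have "sqrt z * \<bar>ln z\<bar> powr p \<le> sqrt z * ((1/z) powr (1/4) * (4*p) powr p)"
      using l2 sz by (intro mult_left_mono) auto
    also have "\<dots> = z powr (1/4) * (4*p) powr p" using sq by simp
    also have "\<dots> \<le> eps powr b * (4*p) powr p"
    proof -
      have "z powr (1/4) \<le> (eps powr (4*b)) powr (1/4)" using 2 by (intro powr_mono2) auto
      also have "\<dots> = eps powr b" by (simp add: powr_powr)
      finally show ?thesis by (intro mult_right_mono) auto
    qed
    finally have X: "sqrt z * \<bar>ln z\<bar> powr p \<le> (4*p) powr p * eps powr b" by (simp add: mult.commute)
    have cC: "(4*p) powr p \<le> C0" using C0nn unfolding C0_def by linarith
    have c0: "0 \<le> (4*p) powr p" by simp
    show ?thesis using fin_aux[OF sz eb c0 cC Lp] X by blast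
  next
    case 3
    have zp: "z > 0" using 3 e by (smt (verit) powr_gt_zero)
    have "\<bar>ln z\<bar> = - ln z" using 3 zp by (simp add: abs_if)
    also have "\<dots> \<le> - ln (eps powr (4*b))"
    proof -
      have "ln (eps powr (4*b)) \<le> ln z" using 3 e zp by (subst ln_le_cancel_iff) auto
      then show ?thesis by simp
    qed
    also have "\<dots> = 4*b*L" using e L by (simp add: ln_powr)
    finally have l1: "\<bar>ln z\<bar> \<le> 4*b*L" .
    have "\<bar>ln z\<bar> powr p \<le> (4*b*L) powr p" using l1 p by (intro powr_mono2) auto
    also have "\<dots> = (4*b) powr p * L powr p"  by (rule powr_mult)
    finally have "sqrt z * \<bar>ln z\<bar> powr p \<le> sqrt z * ((4*b) powr p * L powr p)"
      using sz by (intro mult_left_mono) auto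
    then have X: "sqrt z * \<bar>ln z\<bar> powr p \<le> (4*b) powr p * L powr p * sqrt z" by (simp add: mult_ac)
    have cC: "(4*b) powr p \<le> C0" using C0nn unfolding C0_def by linarith
    have c0: "0 \<le> (4*b) powr p" by simp
    show ?thesis using fin_aux[OF sz eb c0 cC Lp] X by blast
  next
    case 4
    have "\<bar>ln z\<bar> = ln z" using 4 by simp
    also have "\<dots> \<le> z - 1" using 4 by (intro ln_le_minus_one) auto
    also have "\<dots> \<le> K" using 4 by simp
    finally have l1: "\<bar>ln z\<bar> \<le> K" .
    have "\<bar>ln z\<bar> powr p \<le> K powr p" using l1 p by (intro powr_mono2) auto
    then have "sqrt z * \<bar>ln z\<bar> powr p \<le> sqrt z * K powr p"
      using sz by (intro mult_left_mono) auto
    also have "\<dots> \<le> K powr p * L powr p * sqrt z" using Lp C0nn sz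
      by (metis mult.commute mult_le_cancel_left1 mult_left_mono order_refl mult_right_mono order.trans mult.assoc)
    finally have X: "sqrt z * \<bar>ln z\<bar> powr p \<le> K powr p * L powr p * sqrt z" .
    have cC: "K powr p \<le> C0" using C0nn unfolding C0_def by linarith
    have c0: "0 \<le> K powr p" by simp
    show ?thesis using fin_aux[OF sz eb c0 cC Lp] X by blast
  qed
  then show ?thesis unfolding C0_def .
qed




lemma log_consts:
  fixes b g eps L k :: real
  assumes b: "b > 0" and g: "g > 0" and e: "0 < eps" "eps < 1" and L: "L = - ln eps" "L \<ge> 1"
    and k: "k = eps powr (2*b)"
  shows "sqrt (2 * max 1 (ln (1 + 2*g/k) / g) * ln (1 + 2/k) / g)
    \<le> sqrt (2 * (1 + (ln (1 + 2*g) + 2*b) / g) * (ln 3 + 2*b) / g) * L"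
proof -
  define D where "D = (ln (1 + 2*g) + 2*b) / g"
  have D0: "D \<ge> 0" unfolding D_def using g b by simp
  have k0: "k > 0" using k e by simp
  have k1: "k \<le> 1" unfolding k using e b by (intro powr_le1) auto
  have lnk: "ln k = - 2 * b * L" unfolding k using e L by (simp add: ln_powr)
  have l1: "ln (1 + 2/k) \<le> (ln 3 + 2*b) * L"
  proof -
    have "1 \<le> 1/k" using k0 k1 by simp
    then have "1 + 2/k \<le> 3/k" by simp
    then have "ln (1 + 2/k) \<le> ln (3/k)" using k0 by (subst ln_le_cancel_iff) (auto simp: add_pos_pos)
    also have "\<dots> = ln 3 + 2*b*L" using k0 lnk by (simp add: ln_div)
    also have "\<dots> \<le> (ln 3 + 2*b) * L"
    proof -
      have "ln 3 \<le> ln 3 * L" using L by (intro mult_le_cancel_left1[THEN iffD2]) auto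
      then show ?thesis by (simp add: distrib_right)
    qed
    finally show ?thesis .
  qed
  have l2: "ln (1 + 2*g/k) / g \<le> D * L"
  proof -
    have "1 + 2*g/k \<le> (1 + 2*g)/k" using k0 k1 g by (simp add: field_simps)
    then have "ln (1 + 2*g/k) \<le> ln ((1 + 2*g)/k)" using k0 g
      by (subst ln_le_cancel_iff) (auto simp: add_pos_pos)
    also have "\<dots> = ln (1 + 2*g) + 2*b*L" using k0 lnk g by (simp add: ln_div)
    also have "\<dots> \<le> (ln (1 + 2*g) + 2*b) * L"
    proof -
      have "ln (1 + 2*g) \<le> ln (1 + 2*g) * L" using L g by (intro mult_le_cancel_left1[THEN iffD2]) auto
      then show ?thesis by (simp add: distrib_right)
    qed
    finally show ?thesis unfolding D_def using g by (simp add: divide_right_mono field_simps)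
  qed
  have mx: "max 1 (ln (1 + 2*g/k) / g) \<le> (1 + D) * L"
  proof -
    have "1 \<le> (1 + D) * L" using D0 L by (smt (verit) mult_le_cancel_left1 mult_left_mono)
    moreover have "D * L \<le> (1 + D) * L" using L by simp
    ultimately show ?thesis using l2 by simp
  qed
  have lnp: "0 \<le> ln (1 + 2/k)" using k0 by simp
  have "2 * max 1 (ln (1 + 2*g/k) / g) * ln (1 + 2/k) / g \<le> 2 * ((1 + D) * L) * ((ln 3 + 2*b) * L) / g"
    using mx l1 lnp g by (intro divide_right_mono mult_mono mult_left_mono) auto
  also have "\<dots> = (2 * (1 + D) * (ln 3 + 2*b) / g) * L\<^sup>2" by (simp add: power2_eq_square)
  finally have "sqrt (2 * max 1 (ln (1 + 2*g/k) / g) * ln (1 + 2/k) / g) \<le> sqrt ((2 * (1 + D) * (ln 3 + 2*b) / g) * L\<^sup>2)"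
    by (rule real_sqrt_le_mono)
  also have "\<dots> = sqrt (2 * (1 + D) * (ln 3 + 2*b) / g) * sqrt (L\<^sup>2)" by (rule real_sqrt_mult)
  also have "sqrt (L\<^sup>2) = L" using L by simp
  finally show ?thesis unfolding D_def .
qed

lemma L2norm_nonneg: "0 \<le> L2norm f"
proof -
  have "0 \<le> (LINT y:{0..}|lborel. (cmod (f y))\<^sup>2)" by (rule setint_nonneg) simp
  then show ?thesis unfolding L2norm_def by simp
qed

theorem lemma2p4:
  fixes Us Hs :: "real \<Rightarrow> real" and UE HE gl gu Cabs :: real
  assumes "shear_profile Us Hs UE HE gl gu"
    and "Cabs > 0"
  shows "\<forall>\<eta>>0. \<forall>\<delta>\<ge>0. \<exists>C>0. \<exists>eps0>0. \<forall>eps. 0 < eps \<and> eps < eps0 \<longrightarrow>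
     (\<forall>G. weight_fn Us Hs gu Cabs eps G \<longrightarrow>
       (\<forall>h. in_L2 h \<longrightarrow>
          L2norm (\<lambda>y. complex_of_real (sqrt (Zw G y) * \<bar>ln (Zw G y)\<bar> powr (1 + \<eta>/3)) * h y)
            \<le> C * \<bar>ln eps\<bar> powr (1 + \<eta>/3) *
               (L2norm (\<lambda>y. complex_of_real (sqrt (Zw G y)) * h y) + eps powr (1/4 + \<delta>) * L2norm h)
        \<and> (\<forall>R. in_L2 R \<and> (\<forall>y. y \<notin> {0..2} \<longrightarrow> R y = 0) \<longrightarrow>
             cmod (inner0 R (prim h))
               \<le> C * \<bar>ln eps\<bar> powr (1 + \<eta>/3) * L2norm (\<lambda>y. complex_of_real (sqrt (Zw G y)) * R y) *
                  (L2norm (\<lambda>y. complex_of_real (sqrt (Zw G y)) * h y) + eps powr (1/4 + \<delta>) * L2norm h))))"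
proof (intro allI impI)
  fix \<eta> \<delta> :: real assume eta: "\<eta> > 0" and del: "\<delta> \<ge> 0"
  define p where "p = 1 + \<eta>/3"
  define b where "b = 1/4 + \<delta>"
  have p1: "p \<ge> 1" unfolding p_def using eta by simp
  have b0: "b > 0" unfolding b_def using del by simp
  have gu: "gu > 0" and ga: "gamma0 Us Hs > 0" using assms(1) unfolding shear_profile_def by auto
  define c0 where "c0 = 1 / (2 * gu\<^sup>2)"
  define c1 where "c1 = 2 / gamma0 Us Hs"
  define K where "K = max 1 (2 * c1)"
  define g where "g = 3/4 * c0"
  have c0p: "c0 > 0" unfolding c0_def using gu by simp
  have gp: "g > 0" unfolding g_def using c0p by simp
  have K1: "K \<ge> 1" unfolding K_def by simp
  define C0 where "C0 = (4*p) powr p + (4*b) powr p + K powr p"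
  have C0p: "C0 > 0"
  proof -
    have "0 < K powr p" using K1 by simp
    moreover have "0 \<le> (4*p) powr p" "0 \<le> (4*b) powr p" by simp_all
    ultimately show ?thesis unfolding C0_def by linarith
  qed
  define C1 where "C1 = sqrt 2 * C0"
  define C2 where "C2 = sqrt (2 * (1 + (ln (1 + 2*g) + 2*b) / g) * (ln 3 + 2*b) / g)"
  define C where "C = max C1 C2"
  have C1p: "C1 > 0" unfolding C1_def using C0p by simp
  have Cp: "C > 0" unfolding C_def using C1p by simp
  show "\<exists>C>0. \<exists>eps0>0. \<forall>eps. 0 < eps \<and> eps < eps0 \<longrightarrow>
     (\<forall>G. weight_fn Us Hs gu Cabs eps G \<longrightarrow>
       (\<forall>h. in_L2 h \<longrightarrow>
          L2norm (\<lambda>y. complex_of_real (sqrt (Zw G y) * \<bar>ln (Zw G y)\<bar> powr (1 + \<eta>/3)) * h y)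
            \<le> C * \<bar>ln eps\<bar> powr (1 + \<eta>/3) *
               (L2norm (\<lambda>y. complex_of_real (sqrt (Zw G y)) * h y) + eps powr (1/4 + \<delta>) * L2norm h)
        \<and> (\<forall>R. in_L2 R \<and> (\<forall>y. y \<notin> {0..2} \<longrightarrow> R y = 0) \<longrightarrow>
             cmod (inner0 R (prim h))
               \<le> C * \<bar>ln eps\<bar> powr (1 + \<eta>/3) * L2norm (\<lambda>y. complex_of_real (sqrt (Zw G y)) * R y) *
                  (L2norm (\<lambda>y. complex_of_real (sqrt (Zw G y)) * h y) + eps powr (1/4 + \<delta>) * L2norm h))))"
    unfolding p_def[symmetric] b_def[symmetric]
  proof (rule exI[of _ C], intro conjI Cp, rule exI[of _ "exp (-1)"], intro conjI allI impI)
    show "exp (-1) > (0::real)" by simp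
    fix eps G h assume e: "0 < eps \<and> eps < exp (-1)" and w: "weight_fn Us Hs gu Cabs eps G" and hL: "in_L2 h"
    define L where "L = - ln eps"
    have e0: "0 < eps" using e by simp
    have "ln eps < ln (exp (-1))" using e0 e by (subst ln_less_cancel_iff) auto
    then have Lg: "L > 1" unfolding L_def by simp
    have "exp (-1) < (1::real)" by simp
    then have e1: "eps < 1" using e by linarith
    have absL: "\<bar>ln eps\<bar> = L" unfolding L_def using e0 e1 by simp
    have Lp: "L \<le> L powr p" using powr_mono[OF p1, of L] Lg by simp
    note wp = weight_props[OF w]
    have ub: "\<And>y. y \<in> {0..2} \<Longrightarrow> G y \<le> c1" using wp(3) unfolding c1_def .
    have lb: "\<And>y. y \<in> {0..3/2} \<Longrightarrow> c0 \<le> G y" using wp(4) unfolding c0_def .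
    note zp = Z_props[OF wp(1) wp(2) ub lb wp(5) c0p]
    have Zm: "Zw G \<in> borel_measurable borel" by (rule borel_measurable_mono[OF zp(1)])
    have Z0: "\<And>y. 0 \<le> Zw G y" by (rule zp(2))
    have ZK: "\<And>y. Zw G y \<le> K" using zp(3) unfolding K_def by (meson max.cobounded2 order_trans)
    have Zlb: "\<And>s. s \<in> {0..2} \<Longrightarrow> g * s \<le> Zw G s" using zp(4) unfolding g_def .
    have P1: "L2norm (\<lambda>y. complex_of_real (sqrt (Zw G y) * \<bar>ln (Zw G y)\<bar> powr p) * h y)
       \<le> sqrt 2 * (C0 * L powr p) * (L2norm (\<lambda>y. complex_of_real (sqrt (Zw G y)) * h y) + eps powr b * L2norm h)"
    proof (rule part1_int[OF hL Zm Z0 ZK])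
      fix y :: real
      show "0 \<le> sqrt (Zw G y) * \<bar>ln (Zw G y)\<bar> powr p \<and>
        sqrt (Zw G y) * \<bar>ln (Zw G y)\<bar> powr p \<le> C0 * L powr p * (sqrt (Zw G y) + eps powr b)"
        using pw1[OF p1 b0 K1 e0 e1 L_def _ Z0 ZK] Lg Z0[of y] unfolding C0_def by auto
    qed (use C0p in auto)
    have CL: "sqrt 2 * (C0 * L powr p) \<le> C * L powr p"
    proof -
      have "sqrt 2 * (C0 * L powr p) = C1 * L powr p" unfolding C1_def by simp
      also have "\<dots> \<le> C * L powr p" unfolding C_def by (intro mult_right_mono) auto
      finally show ?thesis .
    qed
    have HZ0: "0 \<le> L2norm (\<lambda>y. complex_of_real (sqrt (Zw G y)) * h y) + eps powr b * L2norm h"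
      using L2norm_nonneg[of "\<lambda>y. complex_of_real (sqrt (Zw G y)) * h y"] L2norm_nonneg[of h] by simp
    show "L2norm (\<lambda>y. complex_of_real (sqrt (Zw G y) * \<bar>ln (Zw G y)\<bar> powr p) * h y)
       \<le> C * \<bar>ln eps\<bar> powr p * (L2norm (\<lambda>y. complex_of_real (sqrt (Zw G y)) * h y) + eps powr b * L2norm h)"
      unfolding absL using P1 CL HZ0 by (meson mult_right_mono order_trans)
    fix R assume RR: "in_L2 R \<and> (\<forall>y. y \<notin> {0..2} \<longrightarrow> R y = 0)"
    define k where "k = eps powr (2*b)"
    have kp: "k > 0" unfolding k_def using e0 by simp
    have sk: "sqrt k = eps powr b" unfolding k_def using e0
      by (simp add: powr_half_sqrt[symmetric] powr_powr)
    define S where "S = sqrt (2 * max 1 (ln (1 + 2*g/k) / g) * ln (1 + 2/k) / g)"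
    have RL: "in_L2 R" and Rs: "\<And>y. y \<notin> {0..2} \<Longrightarrow> R y = 0" using RR by auto
    have P2: "cmod (inner0 R (prim h)) \<le> S * L2norm (\<lambda>y. complex_of_real (sqrt (Zw G y)) * R y)
       * (L2norm (\<lambda>y. complex_of_real (sqrt (Zw G y)) * h y) + sqrt k * L2norm h)"
      unfolding S_def by (rule part2[OF hL RL Rs Zm Z0 ZK Zlb gp kp])
    have SC: "S \<le> C * L powr p"
    proof -
      have "S \<le> C2 * L" unfolding S_def C2_def
        by (rule log_consts[OF b0 gp e0 e1 L_def _ k_def]) (use Lg in simp)
      also have "\<dots> \<le> C * L" unfolding C_def using Lg by (intro mult_right_mono) auto
      also have "\<dots> \<le> C * L powr p" using Lp Cp by (intro mult_left_mono) auto
      finally show ?thesis .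
    qed
    have RZ0: "0 \<le> L2norm (\<lambda>y. complex_of_real (sqrt (Zw G y)) * R y)" by (rule L2norm_nonneg)
    have "S * L2norm (\<lambda>y. complex_of_real (sqrt (Zw G y)) * R y)
       * (L2norm (\<lambda>y. complex_of_real (sqrt (Zw G y)) * h y) + sqrt k * L2norm h)
       \<le> C * L powr p * L2norm (\<lambda>y. complex_of_real (sqrt (Zw G y)) * R y)
       * (L2norm (\<lambda>y. complex_of_real (sqrt (Zw G y)) * h y) + sqrt k * L2norm h)"
      using SC RZ0 HZ0 unfolding sk by (intro mult_right_mono) auto
    then show "cmod (inner0 R (prim h)) \<le> C * \<bar>ln eps\<bar> powr p * L2norm (\<lambda>y. complex_of_real (sqrt (Zw G y)) * R y)
       * (L2norm (\<lambda>y. complex_of_real (sqrt (Zw G y)) * h y) + eps powr b * L2norm h)"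
      using P2 unfolding absL sk by linarith
  qed
qed


end
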